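(* Let $p\ge 1$ be an integer and for each $i\in\{0,\dots,p\}$ let $S_i$ be a $\Delta_i$-star with $\Delta_i\ge 3$. Let $G_0=S_0$ and for $i\in\{1,\dots,p\}$ let $G_i = G_{i-1}\rhd_{v_{i-1}} S_i$, where $v_{i-1}$ is a vertex of $G_{i-1}$. Let $G=G_p$ have order $n$ and maximum degree $\Delta$, and let $\Delta_{\max}=\max\{\Delta_i: 0\le i\le p\}$. Then \[\gamma^{\rm ID}(G)\le \left(\frac{\Delta_{\max}-1}{\Delta_{\max}}\right)n + \frac{1}{\Delta_0} \le \left(\frac{\Delta-1}{\Delta}\right)n + \frac13.\]
   Context: An identifying code of a graph $G$ is a set $C\subseteq V(G)$ such that every vertex $v$ has $N[v]\cap C\neq\emptyset$ and for all distinct $u,v$, $N[u]\cap C \ne N[v]\cap C$, where $N[v]$ is the closed neighborhood; $\gamma^{\rm ID}(G)$ is its minimum size. A $k$-star is $K_{1,k}$. For a graph $G'$, a vertex $v$ of $G'$ and a star $S$, $G'\rhd_v S$ is the graph obtained from the disjoint union of $G'$ and $S$ by identifying $v$ with a leaf of $S$. *)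

theory Defs
  imports Complex_Main
begin

text \<open>Finite simple graphs on natural-number vertices: a pair (V, E) where E is a set of
  2-element subsets of V.\<close>
type_synonym graph = "nat set \<times> nat set set"

definition verts :: "graph \<Rightarrow> nat set" where "verts G = fst G"
definition edges :: "graph \<Rightarrow> nat set set" where "edges G = snd G"

definition closed_nbhd :: "graph \<Rightarrow> nat \<Rightarrow> nat set" where
  "closed_nbhd G v = insert v {u \<in> verts G. {u, v} \<in> edges G}"

definition degree :: "graph \<Rightarrow> nat \<Rightarrow> nat" where
  "degree G v = card {u \<in> verts G. u \<noteq> v \<and> {u, v} \<in> edges G}"

definition max_degree :: "graph \<Rightarrow> nat" where
  "max_degree G = Max (degree G ` verts G)"

definition is_identifying_code :: "graph \<Rightarrow> nat set \<Rightarrow> bool" where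
  "is_identifying_code G C \<longleftrightarrow>
     C \<subseteq> verts G \<and>
     (\<forall>v \<in> verts G. closed_nbhd G v \<inter> C \<noteq> {}) \<and>
     (\<forall>u \<in> verts G. \<forall>v \<in> verts G. u \<noteq> v \<longrightarrow> closed_nbhd G u \<inter> C \<noteq> closed_nbhd G v \<inter> C)"

definition gamma_ID :: "graph \<Rightarrow> nat" where
  "gamma_ID G = Min (card ` {C. is_identifying_code G C})"

definition star :: "nat \<Rightarrow> graph" where
  "star k = ({0..k}, {{0, j} | j. 1 \<le> j \<and> j \<le> k})"

text \<open>G \<rhd>_v S for S a k-star: a fresh centre m and k-1 fresh leaves are added, and the
  centre is joined to v (v plays the role of the identified leaf of S) and to the
  fresh leaves. This is the graph G \<rhd>_v S up to isomorphism (renaming of S's vertices).\<close>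
definition glue_star :: "graph \<Rightarrow> nat \<Rightarrow> nat \<Rightarrow> graph" where
  "glue_star G v k =
     (let m = Max (verts G) + 1 in
      (verts G \<union> {m..m + k - 1},
       edges G \<union> {{m, v}} \<union> {{m, j} | j. m < j \<and> j \<le> m + k - 1}))"

fun star_chain :: "(nat \<Rightarrow> nat) \<Rightarrow> (nat \<Rightarrow> nat) \<Rightarrow> nat \<Rightarrow> graph" where
  "star_chain \<Delta> v 0 = star (\<Delta> 0)"
| "star_chain \<Delta> v (Suc i) = glue_star (star_chain \<Delta> v i) (v i) (\<Delta> (Suc i))"

end

theory Submission
  imports Defs
begin


definition nbA :: "graph \<Rightarrow> nat set \<Rightarrow> nat \<Rightarrow> nat set" where
  "nbA G Z z = {a \<in> verts G - Z. {a,z} \<in> edges G}"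

definition good_inv :: "graph \<Rightarrow> nat set \<Rightarrow> bool" where
  "good_inv G Z \<longleftrightarrow> finite (verts G) \<and> (\<forall>e\<in>edges G. e \<subseteq> verts G) \<and> Z \<subseteq> verts G
    \<and> (\<forall>a b. {a,b} \<in> edges G \<longrightarrow> a \<in> Z \<or> b \<in> Z)
    \<and> (\<exists>P. (\<forall>z\<in>Z. P z \<subseteq> nbA G Z z \<and> 2 \<le> card (P z) \<and> card (nbA G Z z - P z) \<le> 1)
         \<and> (\<forall>z\<in>Z. \<forall>z'\<in>Z. z \<noteq> z' \<longrightarrow> P z \<inter> P z' = {}))"

lemma code_ok:
  assumes "good_inv G Z"
  shows "is_identifying_code G (verts G - Z)"
proof -
  let ?V = "verts G" and ?C = "verts G - Z"
  have fin: "finite ?V" and cov: "\<And>a b. {a,b} \<in> edges G \<Longrightarrow> a \<in> Z \<or> b \<in> Z"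
    and ZV: "Z \<subseteq> ?V"
    using assms unfolding good_inv_def by blast+
  obtain P where P: "\<And>z. z\<in>Z \<Longrightarrow> P z \<subseteq> nbA G Z z \<and> 2 \<le> card (P z) \<and> card (nbA G Z z - P z) \<le> 1"
    and D: "\<And>z z'. z\<in>Z \<Longrightarrow> z'\<in>Z \<Longrightarrow> z \<noteq> z' \<Longrightarrow> P z \<inter> P z' = {}"
    using assms unfolding good_inv_def by metis
  have finA: "finite (nbA G Z z)" for z using fin unfolding nbA_def by auto
  have nonZ: "closed_nbhd G u \<inter> ?C = {u}" if "u \<in> ?V" "u \<notin> Z" for u
  proof -
    have "False" if "w \<in> ?C" "{w,u} \<in> edges G" for w
      using cov[OF that(2)] that(1) \<open>u \<notin> Z\<close> by blast
    then show ?thesis using that unfolding closed_nbhd_def by blast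
  qed
  have isZ: "closed_nbhd G z \<inter> ?C = nbA G Z z" if "z \<in> Z" for z
    using that unfolding closed_nbhd_def nbA_def by auto
  have cardA: "2 \<le> card (nbA G Z z)" if "z \<in> Z" for z
    using P[OF that] card_mono[OF finA] by (meson order_trans)
  show ?thesis unfolding is_identifying_code_def
  proof (intro conjI ballI impI)
    show "?C \<subseteq> ?V" by auto
  next
    fix x assume x: "x \<in> ?V"
    show "closed_nbhd G x \<inter> ?C \<noteq> {}"
    proof (cases "x \<in> Z")
      case True then show ?thesis using isZ cardA by (metis card.empty not_numeral_le_zero)
    next
      case False then show ?thesis using nonZ x by auto
    qed
  next
    fix x y assume x: "x \<in> ?V" and y: "y \<in> ?V" and xy: "x \<noteq> y"
    show "closed_nbhd G x \<inter> ?C \<noteq> closed_nbhd G y \<inter> ?C"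
    proof (cases "x \<in> Z"; cases "y \<in> Z")
      assume a: "x \<in> Z" "y \<in> Z"
      show ?thesis
      proof
        assume "closed_nbhd G x \<inter> ?C = closed_nbhd G y \<inter> ?C"
        then have eq: "nbA G Z x = nbA G Z y" using isZ a by simp
        have "P x \<subseteq> nbA G Z y - P y" using P[OF a(1)] D[OF a xy] eq by auto
        then have "card (P x) \<le> card (nbA G Z y - P y)" using finA by (meson card_mono finite_Diff)
        moreover have "2 \<le> card (P x)" "card (nbA G Z y - P y) \<le> 1" using P[OF a(1)] P[OF a(2)] by auto
        ultimately show False by linarith
      qed
    next
      assume a: "x \<in> Z" "y \<notin> Z"
      have "card (closed_nbhd G x \<inter> ?C) \<ge> 2" using isZ[OF a(1)] cardA[OF a(1)] by simp
      moreover have "card (closed_nbhd G y \<inter> ?C) = 1" using nonZ[OF y a(2)] by simp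
      ultimately show ?thesis by force
    next
      assume a: "x \<notin> Z" "y \<in> Z"
      have "card (closed_nbhd G y \<inter> ?C) \<ge> 2" using isZ[OF a(2)] cardA[OF a(2)] by simp
      moreover have "card (closed_nbhd G x \<inter> ?C) = 1" using nonZ[OF x a(1)] by simp
      ultimately show ?thesis by force
    next
      assume a: "x \<notin> Z" "y \<notin> Z"
      then show ?thesis using nonZ x y xy by auto
    qed
  qed
qed



lemma glue_parts:
  fixes G :: graph and v k :: nat
  defines "m \<equiv> Max (verts G) + 1"
  shows "verts (glue_star G v k) = verts G \<union> {m..m+k-1}"
    and "edges (glue_star G v k) = edges G \<union> {{m,v}} \<union> {{m,j}|j. m<j \<and> j \<le> m+k-1}"
  unfolding glue_star_def m_def Let_def verts_def edges_def by simp_all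

lemma glue_inv:
  assumes inv: "good_inv G Z" and vV: "v \<in> verts G" and k: "k \<ge> 3"
  defines "m \<equiv> Max (verts G) + 1"
  shows "good_inv (glue_star G v k) (insert m Z)"
proof -
  let ?V = "verts G" and ?E = "edges G" and ?L = "{m+1..m+k-1}"
  let ?G = "glue_star G v k"
  have V': "verts ?G = ?V \<union> {m..m+k-1}" and
    E': "edges ?G = ?E \<union> {{m,v}} \<union> {{m,j}|j. m<j \<and> j \<le> m+k-1}"
    using glue_parts unfolding m_def by blast+
  have fin: "finite ?V" and cov: "\<And>a b. {a,b} \<in> ?E \<Longrightarrow> a \<in> Z \<or> b \<in> Z"
    and ZV: "Z \<subseteq> ?V" and EV: "\<And>e. e \<in> ?E \<Longrightarrow> e \<subseteq> ?V"
    using inv unfolding good_inv_def by blast+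
  obtain P where P: "\<And>z. z\<in>Z \<Longrightarrow> P z \<subseteq> nbA G Z z \<and> 2 \<le> card (P z) \<and> card (nbA G Z z - P z) \<le> 1"
    and D: "\<And>z z'. z\<in>Z \<Longrightarrow> z'\<in>Z \<Longrightarrow> z \<noteq> z' \<Longrightarrow> P z \<inter> P z' = {}"
    using inv unfolding good_inv_def by metis
  have lt: "x < m" if "x \<in> ?V" for x using Max_ge[OF fin that] unfolding m_def by simp
  have mV: "m \<notin> ?V" using lt by blast
  have mZ: "m \<notin> Z" using mV ZV by blast
  have vm: "v < m" using lt vV by blast
  let ?Z = "insert m Z"
  have fin': "finite (verts ?G)" using V' fin by simp
  have EV': "e \<subseteq> verts ?G" if "e \<in> edges ?G" for e
    using that EV vV k unfolding V' E' by auto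
  have ZV': "?Z \<subseteq> verts ?G" using ZV k unfolding V' by auto
  have cov': "a \<in> ?Z \<or> b \<in> ?Z" if "{a,b} \<in> edges ?G" for a b
  proof -
    from that consider "{a,b} \<in> ?E" | "{a,b} = {m,v}" | j where "{a,b} = {m,j}"
      unfolding E' by blast
    then show ?thesis
    proof cases
      case 1 then show ?thesis using cov by blast
    next
      case 2 then show ?thesis by (auto simp: doubleton_eq_iff)
    next
      case 3 then show ?thesis by (auto simp: doubleton_eq_iff)
    qed
  qed
  have Aold: "nbA ?G ?Z z = nbA G Z z" if "z \<in> Z" for z
  proof -
    have zm: "z \<noteq> m" using that mZ by blast
    have "a \<in> nbA G Z z" if "a \<in> nbA ?G ?Z z" for a
    proof -
      from that have a: "a \<in> verts ?G" "a \<notin> ?Z" "{a,z} \<in> edges ?G" unfolding nbA_def by auto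
      from a(3) consider "{a,z} \<in> ?E" | "{a,z} = {m,v}" | j where "{a,z} = {m,j}"
        unfolding E' by blast
      then show ?thesis
      proof cases
        case 1 then have "a \<in> ?V" using EV by blast
        then show ?thesis using a 1 unfolding nbA_def by auto
      next
        case 2 then show ?thesis using a zm by (auto simp: doubleton_eq_iff)
      next
        case 3 then show ?thesis using a zm by (auto simp: doubleton_eq_iff)
      qed
    qed
    moreover have "a \<in> nbA ?G ?Z z" if "a \<in> nbA G Z z" for a
      using that mV unfolding nbA_def V' E' by auto
    ultimately show ?thesis by blast
  qed
  have Lsub: "?L \<subseteq> nbA ?G ?Z m"
  proof
    fix a assume a: "a \<in> ?L"
    then have "a \<notin> ?V" using lt by force
    then have "a \<notin> ?Z" using ZV a by auto
    moreover have "{a,m} \<in> edges ?G" unfolding E' using a by (auto simp: insert_commute)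
    moreover have "a \<in> verts ?G" unfolding V' using a by auto
    ultimately show "a \<in> nbA ?G ?Z m" unfolding nbA_def by auto
  qed
  have Anew: "nbA ?G ?Z m - ?L \<subseteq> {v}"
  proof
    fix a assume a: "a \<in> nbA ?G ?Z m - ?L"
    then have a1: "a \<notin> ?Z" "{a,m} \<in> edges ?G" "a \<notin> ?L" unfolding nbA_def by auto
    from a1(2) consider "{a,m} \<in> ?E" | "{a,m} = {m,v}" | j where "{a,m} = {m,j}" "m<j" "j \<le> m+k-1"
      unfolding E' by blast
    then show "a \<in> {v}"
    proof cases
      case 1 then have "m \<in> ?V" using EV by blast
      then show ?thesis using mV by blast
    next
      case 2 then show ?thesis using a1 by (auto simp: doubleton_eq_iff)
    next
      case 3 then show ?thesis using a1 by (auto simp: doubleton_eq_iff)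
    qed
  qed
  have cardL: "card ?L = k - 1" by simp
  have finAn: "finite (nbA ?G ?Z m)" using fin' unfolding nbA_def by auto
  define P' where "P' = P(m := ?L)"
  have P'1: "P' z \<subseteq> nbA ?G ?Z z \<and> 2 \<le> card (P' z) \<and> card (nbA ?G ?Z z - P' z) \<le> 1"
    if "z \<in> ?Z" for z
  proof (cases "z = m")
    case True
    have "card (nbA ?G ?Z m - ?L) \<le> card {v}" using Anew by (intro card_mono) auto
    then show ?thesis using True Lsub k unfolding P'_def by auto
  next
    case False
    then have "z \<in> Z" using that by blast
    then show ?thesis using P[of z] Aold[of z] False unfolding P'_def by auto
  qed
  have P'2: "P' z \<inter> P' z' = {}" if "z \<in> ?Z" "z' \<in> ?Z" "z \<noteq> z'" for z z'
  proof -
    have PV: "P y \<subseteq> ?V" if "y \<in> Z" for y using P[OF that] unfolding nbA_def by auto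
    have LV: "?L \<inter> ?V = {}" using lt by force
    show ?thesis
    proof (cases "z = m")
      case True then have "z' \<in> Z" "z' \<noteq> m" using that by auto
      then show ?thesis using True PV LV unfolding P'_def by auto
    next
      case False
      show ?thesis
      proof (cases "z' = m")
        case True then have "z \<in> Z" using that False by auto
        then show ?thesis using True PV LV False unfolding P'_def by auto
      next
        case False2: False
        then show ?thesis using D[of z z'] that False unfolding P'_def by auto
      qed
    qed
  qed
  have h1: "\<exists>P. (\<forall>z\<in>?Z. P z \<subseteq> nbA ?G ?Z z \<and> 2 \<le> card (P z) \<and> card (nbA ?G ?Z z - P z) \<le> 1)
         \<and> (\<forall>z\<in>?Z. \<forall>z'\<in>?Z. z \<noteq> z' \<longrightarrow> P z \<inter> P z' = {})"
    apply (rule exI[of _ P'])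
    using P'1 P'2 by blast
  have h2: "\<forall>a b. {a,b} \<in> edges ?G \<longrightarrow> a \<in> ?Z \<or> b \<in> ?Z" using cov' by blast
  have h3: "\<forall>e\<in>edges ?G. e \<subseteq> verts ?G" using EV' by blast
  show ?thesis unfolding good_inv_def
    using fin' h3 ZV' h2 h1 by (simp only: simp_thms)
qed



lemma star_parts: "verts (star k) = {0..k}" "edges (star k) = {{0, j} | j. 1 \<le> j \<and> j \<le> k}"
  unfolding star_def verts_def edges_def by simp_all

lemma star_inv:
  assumes k: "k \<ge> 3"
  shows "good_inv (star k) {0}"
proof -
  have A: "nbA (star k) {0} 0 = {1..k}"
    unfolding nbA_def star_parts by (auto simp: doubleton_eq_iff)
  have cov: "\<forall>a b. {a,b} \<in> edges (star k) \<longrightarrow> a \<in> {0} \<or> b \<in> {0}"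
    unfolding star_parts by (auto simp: doubleton_eq_iff)
  have EV: "\<forall>e\<in>edges (star k). e \<subseteq> verts (star k)" unfolding star_parts by auto
  have h1: "\<exists>P. (\<forall>z\<in>{0}. P z \<subseteq> nbA (star k) {0} z \<and> 2 \<le> card (P z) \<and> card (nbA (star k) {0} z - P z) \<le> 1)
         \<and> (\<forall>z\<in>{0::nat}. \<forall>z'\<in>{0}. z \<noteq> z' \<longrightarrow> P z \<inter> P z' = {})"
    apply (rule exI[of _ "\<lambda>_. {1..k}"]) using A k by simp
  show ?thesis unfolding good_inv_def using cov EV h1 by (simp add: star_parts)
qed

lemma star_card: "card (verts (star k)) = k + 1" unfolding star_parts by simp

lemma star_deg: "degree (star k) 0 = k"
proof -
  have "{u \<in> verts (star k). u \<noteq> 0 \<and> {u, 0} \<in> edges (star k)} = {1..k}"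
    unfolding star_parts by (auto simp: doubleton_eq_iff)
  then show ?thesis unfolding degree_def by simp
qed

lemma glue_card:
  assumes fin: "finite (verts G)" and k: "k \<ge> 1"
  shows "card (verts (glue_star G v k)) = card (verts G) + k"
proof -
  define m where "m = Max (verts G) + 1"
  have lt: "x < m" if "x \<in> verts G" for x using Max_ge[OF fin that] unfolding m_def by simp
  have "verts G \<inter> {m..m+k-1} = {}" using lt by force
  moreover have "card {m..m+k-1} = k" using k by simp
  ultimately show ?thesis unfolding glue_parts(1) m_def[symmetric] using fin
    by (simp add: card_Un_disjoint)
qed

lemma glue_deg_mono:
  assumes "finite (verts G)"
  shows "degree G z \<le> degree (glue_star G v k) z"
  unfolding degree_def
  by (rule card_mono) (auto simp: glue_parts assms)

lemma glue_deg_new: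
  assumes fin: "finite (verts G)" and vV: "v \<in> verts G" and k: "k \<ge> 1"
  shows "k \<le> degree (glue_star G v k) (Max (verts G) + 1)"
proof -
  define m where "m = Max (verts G) + 1"
  have lt: "x < m" if "x \<in> verts G" for x using Max_ge[OF fin that] unfolding m_def by simp
  have vm: "v < m" using lt vV by blast
  have sub: "insert v {m+1..m+k-1} \<subseteq> {u \<in> verts (glue_star G v k). u \<noteq> m \<and> {u, m} \<in> edges (glue_star G v k)}"
    unfolding glue_parts m_def[symmetric] using vV vm by (auto simp: insert_commute)
  have "card (insert v {m+1..m+k-1}) = k" using vm k by simp
  moreover have "finite {u \<in> verts (glue_star G v k). u \<noteq> m \<and> {u, m} \<in> edges (glue_star G v k)}"
    using fin by (simp add: glue_parts)
  ultimately show ?thesis unfolding degree_def m_def[symmetric]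
    using card_mono[OF _ sub] by simp
qed



lemma chain_inv:
  assumes D3: "\<And>i. i \<le> p \<Longrightarrow> \<Delta> i \<ge> 3"
    and vin: "\<And>i. i < p \<Longrightarrow> v i \<in> verts (star_chain \<Delta> v i)"
  shows "i \<le> p \<Longrightarrow> \<exists>Z. good_inv (star_chain \<Delta> v i) Z \<and> card Z = i + 1
     \<and> card (verts (star_chain \<Delta> v i)) = 1 + (\<Sum>j\<le>i. \<Delta> j)
     \<and> (\<forall>j\<le>i. \<exists>z\<in>verts (star_chain \<Delta> v i). \<Delta> j \<le> degree (star_chain \<Delta> v i) z)"
proof (induction i)
  case 0
  have "good_inv (star_chain \<Delta> v 0) {0}" using star_inv D3[of 0] by simp
  moreover have "0 \<in> verts (star (\<Delta> 0))" by (simp add: star_parts)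
  moreover have "\<Delta> 0 \<le> degree (star (\<Delta> 0)) 0" using star_deg by simp
  ultimately show ?case using star_card by (intro exI[of _ "{0}"]) auto
next
  case (Suc i)
  then have ip: "i < p" by simp
  then obtain Z where Z: "good_inv (star_chain \<Delta> v i) Z" "card Z = i + 1"
     "card (verts (star_chain \<Delta> v i)) = 1 + (\<Sum>j\<le>i. \<Delta> j)"
     "\<forall>j\<le>i. \<exists>z\<in>verts (star_chain \<Delta> v i). \<Delta> j \<le> degree (star_chain \<Delta> v i) z"
    using Suc.IH by auto
  let ?G = "star_chain \<Delta> v i"
  let ?m = "Max (verts ?G) + 1"
  have fin: "finite (verts ?G)" and ZV: "Z \<subseteq> verts ?G" using Z(1) unfolding good_inv_def by blast+
  have k: "\<Delta> (Suc i) \<ge> 3" using D3 Suc.prems by simp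
  have vv: "v i \<in> verts ?G" using vin ip by simp
  have mZ: "?m \<notin> Z" using ZV Max_ge[OF fin] by fastforce
  have g: "good_inv (star_chain \<Delta> v (Suc i)) (insert ?m Z)"
    using glue_inv[OF Z(1) vv k] by simp
  have c1: "card (insert ?m Z) = Suc i + 1" using mZ Z(2) ZV fin finite_subset by fastforce
  have c2: "card (verts (star_chain \<Delta> v (Suc i))) = 1 + (\<Sum>j\<le>Suc i. \<Delta> j)"
    using glue_card[OF fin, of "\<Delta> (Suc i)" "v i"] k Z(3) by simp
  have Vsub: "verts ?G \<subseteq> verts (star_chain \<Delta> v (Suc i))" by (simp add: glue_parts)
  have c3: "\<forall>j\<le>Suc i. \<exists>z\<in>verts (star_chain \<Delta> v (Suc i)). \<Delta> j \<le> degree (star_chain \<Delta> v (Suc i)) z"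
  proof (intro allI impI)
    fix j assume j: "j \<le> Suc i"
    show "\<exists>z\<in>verts (star_chain \<Delta> v (Suc i)). \<Delta> j \<le> degree (star_chain \<Delta> v (Suc i)) z"
    proof (cases "j = Suc i")
      case True
      have "?m \<in> verts (star_chain \<Delta> v (Suc i))" using k by (simp add: glue_parts)
      moreover have "\<Delta> (Suc i) \<le> degree (star_chain \<Delta> v (Suc i)) ?m"
        using glue_deg_new[OF fin vv, of "\<Delta> (Suc i)"] k by simp
      ultimately show ?thesis using True by blast
    next
      case False
      then have "j \<le> i" using j by simp
      then obtain z where z: "z \<in> verts ?G" "\<Delta> j \<le> degree ?G z" using Z(4) by blast
      have "degree ?G z \<le> degree (star_chain \<Delta> v (Suc i)) z"
        using glue_deg_mono[OF fin] by simp
      then show ?thesis using z Vsub by force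
    qed
  qed
  show ?case using g c1 c2 c3 by blast
qed

lemma arith_bound:
  fixes M :: nat and \<Delta> :: "nat \<Rightarrow> nat"
  assumes D3: "\<And>j. j \<le> p \<Longrightarrow> 3 \<le> \<Delta> j" and DM: "\<And>j. j \<le> p \<Longrightarrow> \<Delta> j \<le> M"
  shows "1 + (\<Sum>j\<le>p. real (\<Delta> j) - 1)
     \<le> (real M - 1) / real M * (1 + (\<Sum>j\<le>p. real (\<Delta> j))) + 1 / real (\<Delta> 0)"
proof -
  have M3: "real M \<ge> 3" using D3[of 0] DM[of 0] by simp
  have d0: "real (\<Delta> 0) \<le> real M" "real (\<Delta> 0) \<ge> 3" using D3[of 0] DM[of 0] by simp_all
  have trm: "real (\<Delta> j) - 1 \<le> (real M - 1) / real M * real (\<Delta> j)" if "j \<le> p" for j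
  proof -
    have "real (\<Delta> j) \<le> real M" using DM[OF that] by simp
    then have "real M * (real (\<Delta> j) - 1) \<le> (real M - 1) * real (\<Delta> j)" by (simp add: algebra_simps)
    then show ?thesis using M3 by (simp add: field_simps)
  qed
  have one: "1 \<le> (real M - 1) / real M + 1 / real (\<Delta> 0)"
  proof -
    have "1 / real M \<le> 1 / real (\<Delta> 0)" using d0 by (simp add: frac_le)
    moreover have "(real M - 1) / real M = 1 - 1 / real M" using M3 by (simp add: field_simps)
    ultimately show ?thesis by simp
  qed
  have "(\<Sum>j\<le>p. real (\<Delta> j) - 1) \<le> (\<Sum>j\<le>p. (real M - 1) / real M * real (\<Delta> j))"
    by (rule sum_mono) (use trm in auto)
  also have "\<dots> = (real M - 1) / real M * (\<Sum>j\<le>p. real (\<Delta> j))" by (simp add: sum_distrib_left)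
  finally show ?thesis using one by (simp add: distrib_left)
qed



theorem mainTheorem5:
  fixes p :: nat and \<Delta> :: "nat \<Rightarrow> nat" and v :: "nat \<Rightarrow> nat"
  assumes "p \<ge> 1"
    and "\<And>i. i \<le> p \<Longrightarrow> \<Delta> i \<ge> 3"
    and "\<And>i. i < p \<Longrightarrow> v i \<in> verts (star_chain \<Delta> v i)"
  shows "real (gamma_ID (star_chain \<Delta> v p))
           \<le> (real (Max (\<Delta> ` {0..p})) - 1) / real (Max (\<Delta> ` {0..p}))
               * real (card (verts (star_chain \<Delta> v p))) + 1 / real (\<Delta> 0)
       \<and> (real (Max (\<Delta> ` {0..p})) - 1) / real (Max (\<Delta> ` {0..p}))
               * real (card (verts (star_chain \<Delta> v p))) + 1 / real (\<Delta> 0)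
           \<le> (real (max_degree (star_chain \<Delta> v p)) - 1) / real (max_degree (star_chain \<Delta> v p))
               * real (card (verts (star_chain \<Delta> v p))) + 1 / 3"
proof -
  let ?G = "star_chain \<Delta> v p"
  let ?V = "verts ?G"
  let ?M = "Max (\<Delta> ` {0..p})"
  let ?D = "max_degree ?G"
  obtain Z where Z: "good_inv ?G Z" "card Z = p + 1" "card ?V = 1 + (\<Sum>j\<le>p. \<Delta> j)"
     "\<forall>j\<le>p. \<exists>z\<in>?V. \<Delta> j \<le> degree ?G z"
    using chain_inv[OF assms(2,3), of p] by auto
  have fin: "finite ?V" and ZV: "Z \<subseteq> ?V" using Z(1) unfolding good_inv_def by blast+
  have code: "is_identifying_code ?G (?V - Z)" using code_ok[OF Z(1)] .
  have "finite {C. is_identifying_code ?G C}"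
    using fin by (rule rev_finite_subset[OF finite_Pow_iff[THEN iffD2]]) (auto simp: is_identifying_code_def)
  then have g: "gamma_ID ?G \<le> card (?V - Z)"
    unfolding gamma_ID_def using code by (intro Min_le) auto
  have cZ: "card Z \<le> card ?V" using card_mono[OF fin ZV] .
  have "real (card (?V - Z)) = real (card ?V) - real (card Z)"
    using card_Diff_subset[OF finite_subset[OF ZV fin] ZV] cZ by simp
  also have "\<dots> = 1 + (\<Sum>j\<le>p. real (\<Delta> j) - 1)"
    using Z(2,3) by (simp add: sum_subtractf)
  finally have g2: "real (gamma_ID ?G) \<le> 1 + (\<Sum>j\<le>p. real (\<Delta> j) - 1)" using g
    by (metis of_nat_le_iff)
  have DM: "\<Delta> j \<le> ?M" if "j \<le> p" for j using that by (intro Max_ge) auto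
  have nV: "real (card ?V) = 1 + (\<Sum>j\<le>p. real (\<Delta> j))" using Z(3) by simp
  have ineq1: "real (gamma_ID ?G) \<le> (real ?M - 1) / real ?M * real (card ?V) + 1 / real (\<Delta> 0)"
    using g2 arith_bound[of p \<Delta> ?M, OF assms(2) DM] nV by simp
  have "?M \<in> \<Delta> ` {0..p}" by (intro Max_in) auto
  then obtain j0 where j0: "j0 \<le> p" "\<Delta> j0 = ?M" by (metis atLeastAtMost_iff imageE)
  then obtain z where z: "z \<in> ?V" "?M \<le> degree ?G z" using Z(4) by metis
  have "degree ?G z \<le> ?D" unfolding max_degree_def using fin z(1) by (intro Max_ge) auto
  then have "?M \<le> ?D" using z(2) by (meson order_trans)
  then have MD: "real ?M \<le> real ?D" by (rule of_nat_mono)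
  have M3: "real ?M \<ge> 3" using assms(2)[OF j0(1)] j0(2) by simp
  have gen: "\<And>x::real. x > 0 \<Longrightarrow> (x - 1) / x = 1 - 1 / x" by (simp add: diff_divide_distrib)
  have "(real ?M - 1) / real ?M = 1 - 1 / real ?M" using M3 by (intro gen) linarith
  moreover have "(real ?D - 1) / real ?D = 1 - 1 / real ?D" using M3 MD by (intro gen) linarith
  moreover have "1 / real ?D \<le> 1 / real ?M" using M3 MD by (intro frac_le) linarith+
  ultimately have fr: "(real ?M - 1) / real ?M \<le> (real ?D - 1) / real ?D" by simp
  have "(real ?M - 1) / real ?M * real (card ?V) \<le> (real ?D - 1) / real ?D * real (card ?V)"
    using fr by (intro mult_right_mono) auto
  moreover have "1 / real (\<Delta> 0) \<le> 1 / 3" using assms(2)[of 0] by (simp add: frac_le)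
  ultimately show ?thesis using ineq1 by linarith
qed

end
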